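(* Let $\Omega\subseteq\mathbb{R}^n$ be bounded and measurable, $Y$ a Hilbert space, $S:L^2(\Omega)\to Y$ linear and continuous, $z\in Y$, $u_a,u_b\in L^\infty(\Omega)$, $u_a\le u_b$, $U_{\mathrm{ad}}=\{u\in L^2(\Omega):u_a\le u\le u_b\text{ a.e.}\}$. Let $u^\dagger$ be a solution of $\min_{u\in U_{\mathrm{ad}}}\frac12\|Su-z\|_Y^2$ satisfying the Active Set Condition (see context). Let $(\varepsilon_k)_k$ be positive reals with $\gamma_{i-1}\varepsilon_i\to0$ as $i\to\infty$. Assume $S_h=S$ and let $(u_k^{\mathrm{in}})_k$ be generated by the inexact Bregman algorithm of the context. Then $\min_{i=1,\dots,k}\|u_i^{\mathrm{in}}-u^\dagger\|\to0$ as $k\to\infty$.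
   Context: $\|\cdot\|$: $L^2(\Omega)$ norm; $P_{U_{\mathrm{ad}}}$: $L^2$-projection onto $U_{\mathrm{ad}}$; $\chi_I$: characteristic function; $|\cdot|$: Lebesgue measure. Active Set Condition, with $p^\dagger:=S^\ast(z-Su^\dagger)$: there exist $I\subseteq\Omega$, $w\in Y$, constants $\kappa,c>0$ with (1) $I\supseteq\{p^\dagger=0\}$ and $\chi_Iu^\dagger=\chi_IP_{U_{\mathrm{ad}}}(S^\ast w)$; (2) with $A:=\Omega\setminus I$, $|\{x\in A:0<|p^\dagger(x)|<\varepsilon\}|\le c\varepsilon^\kappa$ for all $\varepsilon>0$; (3) $S^\ast w\in L^\infty(\Omega)$. $(\alpha_k)_k$ bounded sequence of positive reals, $\gamma_k:=\sum_{j=1}^k\alpha_j^{-1}$ ($\gamma_0=0$). $\mathcal B(\alpha,\lambda,u):=(1+\frac1\alpha)\|u-P_{U_{\mathrm{ad}}}(\frac1\alpha S_h^\ast(z-S_hu)+\lambda)\|$ (here $S_h=S$). Inexact Bregman algorithm: $u_0^{\mathrm{in}}=P_{U_{\mathrm{ad}}}(0)$, $\lambda_0^{\mathrm{in}}=0$; for $k\ge1$ find $u_k^{\mathrm{in}}\in U_{\mathrm{ad}}$ with $\mathcal B(\alpha_k,\lambda_{k-1}^{\mathrm{in}},u_k^{\mathrm{in}})\le\varepsilon_k$, then set $\lambda_k^{\mathrm{in}}=\sum_{i=1}^k\frac1{\alpha_i}S_h^\ast(z-S_hu_i^{\mathrm{in}})$. *)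

theory Defs
  imports "HOL-Analysis.Analysis"
begin

text \<open>L^2(Omega) modelled by square-integrable measurable real functions on the
  measure space lebesgue_on Omega (functions are considered up to a.e. equality
  only through the semi-norm).\<close>

definition L2 :: "'a measure \<Rightarrow> ('a \<Rightarrow> real) set" where
  "L2 M = {f. f \<in> borel_measurable M \<and> integrable M (\<lambda>x. (f x)\<^sup>2)}"

definition L2norm :: "'a measure \<Rightarrow> ('a \<Rightarrow> real) \<Rightarrow> real" where
  "L2norm M f = sqrt (integral\<^sup>L M (\<lambda>x. (f x)\<^sup>2))"

definition Linfty :: "'a measure \<Rightarrow> ('a \<Rightarrow> real) set" where
  "Linfty M = {f. f \<in> borel_measurable M \<and> (\<exists>C. AE x in M. \<bar>f x\<bar> \<le> C)}"

definition Uad :: "'a measure \<Rightarrow> ('a \<Rightarrow> real) \<Rightarrow> ('a \<Rightarrow> real) \<Rightarrow> ('a \<Rightarrow> real) set" where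
  "Uad M ua ub = {u. u \<in> L2 M \<and> (AE x in M. ua x \<le> u x \<and> u x \<le> ub x)}"

definition projUad :: "('a \<Rightarrow> real) \<Rightarrow> ('a \<Rightarrow> real) \<Rightarrow> ('a \<Rightarrow> real) \<Rightarrow> ('a \<Rightarrow> real)" where
  "projUad ua ub v = (\<lambda>x. max (ua x) (min (ub x) (v x)))"

definition is_adjoint :: "'a measure \<Rightarrow> (('a \<Rightarrow> real) \<Rightarrow> 'y::real_inner) \<Rightarrow> ('y \<Rightarrow> ('a \<Rightarrow> real)) \<Rightarrow> bool" where
  "is_adjoint M S Sstar \<longleftrightarrow>
     (\<forall>w. Sstar w \<in> L2 M \<and> (\<forall>u\<in>L2 M. inner (S u) w = integral\<^sup>L M (\<lambda>x. u x * Sstar w x)))"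

definition bounded_linear_L2 :: "'a measure \<Rightarrow> (('a \<Rightarrow> real) \<Rightarrow> 'y::real_normed_vector) \<Rightarrow> bool" where
  "bounded_linear_L2 M S \<longleftrightarrow>
     (\<forall>u\<in>L2 M. \<forall>v\<in>L2 M. S (\<lambda>x. u x + v x) = S u + S v) \<and>
     (\<forall>u\<in>L2 M. \<forall>c. S (\<lambda>x. c * u x) = c *\<^sub>R S u) \<and>
     (\<exists>C. \<forall>u\<in>L2 M. norm (S u) \<le> C * L2norm M u)"

text \<open>B(alpha, lambda, u) with S_h = S.\<close>
definition Bres :: "'a measure \<Rightarrow> ('a \<Rightarrow> real) \<Rightarrow> ('a \<Rightarrow> real) \<Rightarrow> (('a \<Rightarrow> real) \<Rightarrow> 'y::real_inner)
    \<Rightarrow> ('y \<Rightarrow> ('a \<Rightarrow> real)) \<Rightarrow> 'y \<Rightarrow> real \<Rightarrow> ('a \<Rightarrow> real) \<Rightarrow> ('a \<Rightarrow> real) \<Rightarrow> real" where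
  "Bres M ua ub S Sstar z \<alpha> lam u =
     (1 + 1 / \<alpha>) * L2norm M (\<lambda>x. u x - projUad ua ub (\<lambda>y. (1 / \<alpha>) * Sstar (z - S u) y + lam y) x)"

definition active_set_condition :: "'a::euclidean_space set \<Rightarrow> ('a \<Rightarrow> real) \<Rightarrow> ('a \<Rightarrow> real)
    \<Rightarrow> (('a \<Rightarrow> real) \<Rightarrow> 'y::real_inner) \<Rightarrow> ('y \<Rightarrow> ('a \<Rightarrow> real)) \<Rightarrow> 'y \<Rightarrow> ('a \<Rightarrow> real) \<Rightarrow> bool" where
  "active_set_condition \<Omega> ua ub S Sstar z ud \<longleftrightarrow>
     (let p = Sstar (z - S ud) in
      \<exists>I w \<kappa> c. I \<in> sets lebesgue \<and> I \<subseteq> \<Omega> \<and> \<kappa> > 0 \<and> c > 0 \<and>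
        {x\<in>\<Omega>. p x = 0} \<subseteq> I \<and>
        (AE x in lebesgue_on \<Omega>. x \<in> I \<longrightarrow> ud x = projUad ua ub (Sstar w) x) \<and>
        (\<forall>\<epsilon>>0. emeasure lebesgue {x\<in>\<Omega> - I. 0 < \<bar>p x\<bar> \<and> \<bar>p x\<bar> < \<epsilon>} \<le> ennreal (c * \<epsilon> powr \<kappa>)) \<and>
        Sstar w \<in> Linfty (lebesgue_on \<Omega>))"

end

theory Submission
  imports Defs
begin


lemma L2_meas: "f \<in> L2 M \<Longrightarrow> f \<in> borel_measurable M"
  by (simp add: L2_def)

lemma L2_sq_int: "f \<in> L2 M \<Longrightarrow> integrable M (\<lambda>x. (f x)\<^sup>2)"
  by (simp add: L2_def)

lemma L2_mult_int:
  assumes "f \<in> L2 M" "g \<in> L2 M"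
  shows "integrable M (\<lambda>x. f x * g x)"
proof (rule Bochner_Integration.integrable_bound[where f="\<lambda>x. (f x)\<^sup>2 + (g x)\<^sup>2"])
  show "integrable M (\<lambda>x. (f x)\<^sup>2 + (g x)\<^sup>2)"
    using assms by (simp add: L2_def)
  show "(\<lambda>x. f x * g x) \<in> borel_measurable M" using assms by (auto simp: L2_def intro!: borel_measurable_times)
  show "AE x in M. norm (f x * g x) \<le> norm ((f x)\<^sup>2 + (g x)\<^sup>2)"
  proof (rule AE_I2)
    fix x
    have "0 \<le> (\<bar>f x\<bar> - \<bar>g x\<bar>)\<^sup>2" by simp
    then have "2 * \<bar>f x\<bar> * \<bar>g x\<bar> \<le> (f x)\<^sup>2 + (g x)\<^sup>2"
      by (simp add: power2_eq_square algebra_simps)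
    moreover have "0 \<le> \<bar>f x\<bar> * \<bar>g x\<bar>" by simp
    ultimately have "\<bar>f x\<bar> * \<bar>g x\<bar> \<le> (f x)\<^sup>2 + (g x)\<^sup>2" by linarith
    then show "norm (f x * g x) \<le> norm ((f x)\<^sup>2 + (g x)\<^sup>2)"
      by (simp add: abs_mult)
  qed
qed

lemma L2_add:
  assumes "f \<in> L2 M" "g \<in> L2 M"
  shows "(\<lambda>x. f x + g x) \<in> L2 M"
proof -
  have "integrable M (\<lambda>x. (f x)\<^sup>2 + (g x)\<^sup>2 + 2 * (f x * g x))"
    using assms L2_mult_int[OF assms] by (simp add: L2_def)
  moreover have "(\<lambda>x. (f x)\<^sup>2 + (g x)\<^sup>2 + 2 * (f x * g x)) = (\<lambda>x. (f x + g x)\<^sup>2)"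
    by (simp add: power2_eq_square algebra_simps)
  ultimately show ?thesis using assms by (auto simp: L2_def intro!: borel_measurable_add)
qed

lemma L2_scale:
  assumes "f \<in> L2 M"
  shows "(\<lambda>x. c * f x) \<in> L2 M"
proof -
  have "integrable M (\<lambda>x. c\<^sup>2 * (f x)\<^sup>2)" using assms by (simp add: L2_def)
  moreover have "(\<lambda>x. c\<^sup>2 * (f x)\<^sup>2) = (\<lambda>x. (c * f x)\<^sup>2)"
    by (simp add: power_mult_distrib)
  moreover have "(\<lambda>x. c * f x) \<in> borel_measurable M" using assms by (auto simp: L2_def intro!: borel_measurable_times)
  ultimately show ?thesis by (simp add: L2_def)
qed

lemma L2_diff:
  assumes "f \<in> L2 M" "g \<in> L2 M"
  shows "(\<lambda>x. f x - g x) \<in> L2 M"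
  using L2_add[OF assms(1) L2_scale[OF assms(2), of "-1"]] by simp

lemma L2_sum:
  assumes "\<And>i. i \<in> A \<Longrightarrow> f i \<in> L2 M"
  shows "(\<lambda>x. \<Sum>i\<in>A. f i x) \<in> L2 M"
  using assms
proof (induction A rule: infinite_finite_induct)
  case (infinite A)
  then show ?case by (simp add: L2_def)
next
  case empty
  then show ?case by (simp add: L2_def)
next
  case (insert a A)
  then show ?case using L2_add[of "f a" M "\<lambda>x. \<Sum>i\<in>A. f i x"] by simp
qed

lemma L2_bdd:
  assumes "finite_measure M" "f \<in> borel_measurable M" "AE x in M. \<bar>f x\<bar> \<le> B"
  shows "f \<in> L2 M"
proof -
  have "AE x in M. (f x)\<^sup>2 \<le> B\<^sup>2"
    using assms(3)
  proof eventually_elim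
    case (elim x)
    have "\<bar>f x\<bar>\<^sup>2 \<le> B\<^sup>2" by (rule power_mono[OF elim abs_ge_zero])
    then show ?case by simp
  qed
  then have "integrable M (\<lambda>x. (f x)\<^sup>2)"
  proof -
    have "AE x in M. norm ((f x)\<^sup>2) \<le> B\<^sup>2" using \<open>AE x in M. (f x)\<^sup>2 \<le> B\<^sup>2\<close> by simp
    moreover have "(\<lambda>x. (f x)\<^sup>2) \<in> borel_measurable M" using assms(2) by (auto intro!: borel_measurable_power)
    ultimately show ?thesis by (rule finite_measure.integrable_const_bound[OF assms(1)])
  qed
  then show ?thesis using assms by (simp add: L2_def)
qed

lemma L2norm_sq:
  "(L2norm M f)\<^sup>2 = integral\<^sup>L M (\<lambda>x. (f x)\<^sup>2)"
  unfolding L2norm_def by (simp add: integral_nonneg)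

lemma L2norm_nonneg: "L2norm M f \<ge> 0"
  unfolding L2norm_def by simp



lemma proj_ineq:
  fixes a b l y :: real
  assumes "a \<le> b" "a \<le> y" "y \<le> b"
  shows "(l - max a (min b l)) * (max a (min b l) - y) \<ge> 0"
proof (cases "l < a")
  case True
  then have "max a (min b l) = a" using assms by auto
  then show ?thesis using True assms by (simp add: mult_nonpos_nonpos)
next
  case False
  show ?thesis
  proof (cases "l > b")
    case True
    then have "max a (min b l) = b" using assms by auto
    then show ?thesis using True assms by simp
  next
    case False
    then have "max a (min b l) = l" using \<open>\<not> l < a\<close> by auto
    then show ?thesis by simp
  qed
qed

lemma key_pt:
  fixes a b ud l s q g K B :: real and inI :: bool
  assumes ab: "a \<le> b" "a \<le> ud" "ud \<le> b"
    and bb: "q > 0 \<Longrightarrow> ud = b" "q < 0 \<Longrightarrow> ud = a"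
    and gK: "g > 0" "K > 0"
    and Ks: "\<bar>ud - s\<bar> \<le> K" and Bd: "\<bar>max a (min b l) - ud\<bar> \<le> B"
    and inI: "inI \<Longrightarrow> ud = max a (min b s)" and nI: "\<not> inI \<Longrightarrow> q \<noteq> 0"
  shows "(l - (s + g*q)) * (max a (min b l) - ud) \<ge> (max a (min b l) - ud)\<^sup>2
           - (if \<not> inI \<and> 0 < \<bar>q\<bar> \<and> \<bar>q\<bar> < K/g then K*B else 0)"
proof -
  define v where "v = max a (min b l)"
  define d where "d = v - ud"
  have h1: "(l - v) * d \<ge> 0" unfolding v_def d_def by (rule proj_ineq[OF ab])
  have v_ab: "a \<le> v" "v \<le> b" unfolding v_def using ab by auto
  have h2: "q * (ud - v) = \<bar>q\<bar> * \<bar>d\<bar>"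
  proof (cases "q > 0")
    case True
    then show ?thesis using bb(1) v_ab unfolding d_def by (simp add: abs_if)
  next
    case False
    show ?thesis
    proof (cases "q < 0")
      case True
      then show ?thesis using bb(2) v_ab unfolding d_def by (simp add: abs_if algebra_simps)
    next
      case False
      then show ?thesis using \<open>\<not> q > 0\<close> by simp
    qed
  qed
  have exp: "(l - (s + g*q)) * d = (l - v) * d + d\<^sup>2 + (ud - s) * d + g * (q * (ud - v))"
    unfolding d_def by (simp add: power2_eq_square algebra_simps)
  have gq: "g * (q * (ud - v)) = g * \<bar>q\<bar> * \<bar>d\<bar>" using h2 by simp
  show ?thesis
  proof (cases inI)
    case True
    have "(s - max a (min b s)) * (max a (min b s) - v) \<ge> 0"
      by (rule proj_ineq[OF ab(1) v_ab])
    then have "(ud - s) * d \<ge> 0" using inI[OF True] unfolding d_def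
      by (simp add: algebra_simps)
    moreover have "g * \<bar>q\<bar> * \<bar>d\<bar> \<ge> 0" using gK by simp
    ultimately show ?thesis using h1 exp gq True unfolding v_def[symmetric] d_def[symmetric] by simp
  next
    case False
    have e1: "(ud - s) * d \<ge> - (K * \<bar>d\<bar>)"
    proof -
      have "\<bar>(ud - s) * d\<bar> \<le> K * \<bar>d\<bar>" using Ks by (simp add: abs_mult mult_right_mono)
      then show ?thesis by linarith
    qed
    show ?thesis
    proof (cases "\<bar>q\<bar> < K/g")
      case True
      have "K * \<bar>d\<bar> \<le> K * B" using Bd gK unfolding d_def v_def by simp
      moreover have "g * \<bar>q\<bar> * \<bar>d\<bar> \<ge> 0" using gK by simp
      moreover have "0 < \<bar>q\<bar>" using nI False by simp
      ultimately show ?thesis using h1 exp gq e1 False True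
        unfolding v_def[symmetric] d_def[symmetric] by simp
    next
      case c2: False
      then have "K \<le> g * \<bar>q\<bar>" using gK by (simp add: not_less pos_divide_le_eq mult.commute)
      then have "K * \<bar>d\<bar> \<le> g * \<bar>q\<bar> * \<bar>d\<bar>" by (simp add: mult_right_mono)
      then show ?thesis using h1 exp gq e1 c2
        unfolding v_def[symmetric] d_def[symmetric] by simp
    qed
  qed
qed



lemma small_lin:
  fixes a b :: real
  assumes "\<And>t. 0 < t \<Longrightarrow> t \<le> 1 \<Longrightarrow> 0 \<le> 2 * a + t * b"
  shows "0 \<le> a"
proof (rule ccontr)
  assume "\<not> 0 \<le> a"
  then have a: "a < 0" by simp
  define t where "t = min 1 (- a / (\<bar>b\<bar> + 1))"
  have t0: "0 < t" using a unfolding t_def by (simp add: divide_neg_pos add_pos_nonneg)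
  have t1: "t \<le> 1" unfolding t_def by simp
  have pos: "0 < \<bar>b\<bar> + 1" by simp
  have "t \<le> (- a) / (\<bar>b\<bar> + 1)" unfolding t_def by (simp del: minus_divide_left)
  then have "t * (\<bar>b\<bar> + 1) \<le> - a" by (metis pos pos_le_divide_eq)
  then have "t * \<bar>b\<bar> < - a" using t0 by (simp add: algebra_simps)
  moreover have "t * b \<le> t * \<bar>b\<bar>" using t0 by (simp add: mult_left_mono)
  ultimately have "2 * a + t * b < 0" using a by linarith
  with assms[OF t0 t1] show False by simp
qed

lemma norm_add_scale_sq:
  fixes a b :: "'y::real_inner"
  shows "(norm (a + t *\<^sub>R b))\<^sup>2 = (norm a)\<^sup>2 + 2 * t * inner a b + t\<^sup>2 * (norm b)\<^sup>2"
  unfolding power2_norm_eq_inner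
  by (simp add: inner_add_left inner_add_right inner_commute power2_eq_square algebra_simps)

lemma L2norm_bdd:
  assumes "finite_measure M" "f \<in> borel_measurable M" "AE x in M. \<bar>f x\<bar> \<le> Bd"
  shows "L2norm M f \<le> sqrt (Bd\<^sup>2 * measure M (space M))"
proof -
  have fi: "f \<in> L2 M" using L2_bdd[OF assms] .
  have "integral\<^sup>L M (\<lambda>x. (f x)\<^sup>2) \<le> integral\<^sup>L M (\<lambda>x. Bd\<^sup>2)"
  proof (rule integral_mono_AE)
    show "integrable M (\<lambda>x. (f x)\<^sup>2)" using fi by (simp add: L2_def)
    show "integrable M (\<lambda>x. Bd\<^sup>2)" using finite_measure.integrable_const[OF assms(1)] by blast
    show "AE x in M. (f x)\<^sup>2 \<le> Bd\<^sup>2" using assms(3)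
    proof eventually_elim
      case (elim x)
      have "\<bar>f x\<bar>\<^sup>2 \<le> Bd\<^sup>2" by (rule power_mono[OF elim abs_ge_zero])
      then show ?case by simp
    qed
  qed
  then show ?thesis unfolding L2norm_def by (simp add: mult.commute)
qed



theorem corollary4p6:
  fixes \<Omega> :: "'a::euclidean_space set"
    and S :: "('a \<Rightarrow> real) \<Rightarrow> 'y::{real_inner, complete_space}"
    and Sstar :: "'y \<Rightarrow> ('a \<Rightarrow> real)"
    and z :: 'y
    and ua ub ud :: "'a \<Rightarrow> real"
    and \<alpha> \<epsilon> :: "nat \<Rightarrow> real"
    and u lam :: "nat \<Rightarrow> 'a \<Rightarrow> real"
  defines "M \<equiv> lebesgue_on \<Omega>"
  defines "\<gamma> \<equiv> (\<lambda>k. \<Sum>j=1..k. 1 / \<alpha> j)"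
  assumes \<Omega>: "bounded \<Omega>" "\<Omega> \<in> sets lebesgue"
    and S: "bounded_linear_L2 M S"
    and Sstar: "is_adjoint M S Sstar"
    and uab: "ua \<in> Linfty M" "ub \<in> Linfty M" "AE x in M. ua x \<le> ub x"
    and ud_sol: "ud \<in> Uad M ua ub" "\<forall>v\<in>Uad M ua ub. norm (S ud - z) \<le> norm (S v - z)"
    and asc: "active_set_condition \<Omega> ua ub S Sstar z ud"
    and alpha_pos: "\<forall>k. \<alpha> k > 0" and alpha_bdd: "bounded (range \<alpha>)"
    and eps_pos: "\<forall>k. \<epsilon> k > 0"
    and eps_lim: "(\<lambda>i. \<gamma> (i - 1) * \<epsilon> i) \<longlonglongrightarrow> 0"
    and init: "u 0 = projUad ua ub (\<lambda>x. 0)" "lam 0 = (\<lambda>x. 0)"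
    and step: "\<forall>k\<ge>1. u k \<in> Uad M ua ub \<and>
                  Bres M ua ub S Sstar z (\<alpha> k) (lam (k - 1)) (u k) \<le> \<epsilon> k \<and>
                  lam k = (\<lambda>x. \<Sum>i=1..k. (1 / \<alpha> i) * Sstar (z - S (u i)) x)"
  shows "(\<lambda>k. Min ((\<lambda>i. L2norm M (\<lambda>x. u i x - ud x)) ` {1..k})) \<longlonglongrightarrow> 0"
proof -
  have lmeas: "\<Omega> \<in> lmeasurable" using \<Omega> bounded_set_imp_lmeasurable by blast
  have fm: "finite_measure M" unfolding M_def by (rule finite_measure_lebesgue_on[OF lmeas])
  have spM: "space M = \<Omega>" unfolding M_def by simp
  obtain C0 where C0b: "\<And>f. f \<in> L2 M \<Longrightarrow> norm (S f) \<le> C0 * L2norm M f"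
    using S unfolding bounded_linear_L2_def by blast
  define C where "C = max C0 0"
  have C0: "C \<ge> 0" unfolding C_def by simp
  have Cb: "norm (S f) \<le> C * L2norm M f" if "f \<in> L2 M" for f
  proof -
    have "C0 * L2norm M f \<le> C * L2norm M f" unfolding C_def
      by (rule mult_right_mono) (auto simp: L2norm_nonneg)
    then show ?thesis using C0b[OF that] by linarith
  qed
  have Sadd: "S (\<lambda>x. f x + g x) = S f + S g" if "f \<in> L2 M" "g \<in> L2 M" for f g
    using S that unfolding bounded_linear_L2_def by blast
  have Sscale: "S (\<lambda>x. c * f x) = c *\<^sub>R S f" if "f \<in> L2 M" for f c
    using S that unfolding bounded_linear_L2_def by blast
  have Sdiff: "S (\<lambda>x. f x - g x) = S f - S g" if "f \<in> L2 M" "g \<in> L2 M" for f g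
  proof -
    have "S (\<lambda>x. f x - g x) = S (\<lambda>x. f x + (\<lambda>x. (-1) * g x) x)" by simp
    also have "\<dots> = S f + S (\<lambda>x. (-1) * g x)" by (rule Sadd[OF that(1) L2_scale[OF that(2)]])
    also have "\<dots> = S f - S g" using Sscale[OF that(2), of "-1"] by simp
    finally show ?thesis .
  qed
  have SsL2: "Sstar y \<in> L2 M" for y using Sstar unfolding is_adjoint_def by blast
  have adj: "inner (S f) y = integral\<^sup>L M (\<lambda>x. f x * Sstar y x)" if "f \<in> L2 M" for f y
    using Sstar that unfolding is_adjoint_def by blast
  obtain Ca where Ca: "AE x in M. \<bar>ua x\<bar> \<le> Ca" using uab(1) unfolding Linfty_def by blast
  obtain Cb' where Cb': "AE x in M. \<bar>ub x\<bar> \<le> Cb'" using uab(2) unfolding Linfty_def by blast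
  have ua_m[measurable]: "ua \<in> borel_measurable M" using uab(1) unfolding Linfty_def by blast
  have ub_m[measurable]: "ub \<in> borel_measurable M" using uab(2) unfolding Linfty_def by blast
  define Bu where "Bu = \<bar>Ca\<bar> + \<bar>Cb'\<bar>"
  have Bu0: "Bu \<ge> 0" unfolding Bu_def by simp
  have Uad_ab: "AE x in M. ua x \<le> v x \<and> v x \<le> ub x" if "v \<in> Uad M ua ub" for v
    using that unfolding Uad_def by blast
  have Uad_L2: "v \<in> L2 M" if "v \<in> Uad M ua ub" for v
    using that unfolding Uad_def by blast
  have Uad_bd: "AE x in M. \<bar>v x\<bar> \<le> Bu" if "v \<in> Uad M ua ub" for v
    using Uad_ab[OF that] Ca Cb' by eventually_elim (auto simp: Bu_def)
  have Uad_I: "v \<in> Uad M ua ub" if "v \<in> L2 M" "AE x in M. ua x \<le> v x \<and> v x \<le> ub x" for v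
    using that unfolding Uad_def by blast
  have ud_L2[measurable]: "ud \<in> L2 M" using Uad_L2[OF ud_sol(1)] .
  have ud_m[measurable]: "ud \<in> borel_measurable M" using ud_L2 by (rule L2_meas)
  obtain I w \<kappa> c where I: "I \<in> sets lebesgue" "I \<subseteq> \<Omega>" and \<kappa>: "\<kappa> > 0" and c: "c > 0"
    and I0: "{x\<in>\<Omega>. Sstar (z - S ud) x = 0} \<subseteq> I"
    and Iud: "AE x in M. x \<in> I \<longrightarrow> ud x = projUad ua ub (Sstar w) x"
    and meas: "\<And>\<epsilon>. \<epsilon> > 0 \<Longrightarrow> emeasure lebesgue {x\<in>\<Omega> - I. 0 < \<bar>Sstar (z - S ud) x\<bar> \<and> \<bar>Sstar (z - S ud) x\<bar> < \<epsilon>} \<le> ennreal (c * \<epsilon> powr \<kappa>)"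
    and wLinf: "Sstar w \<in> Linfty M"
    using asc unfolding active_set_condition_def Let_def M_def by blast
  define p where "p = Sstar (z - S ud)"
  define s where "s = Sstar w"
  have p_L2: "p \<in> L2 M" unfolding p_def by (rule SsL2)
  have s_L2: "s \<in> L2 M" unfolding s_def by (rule SsL2)
  have p_m[measurable]: "p \<in> borel_measurable M" using p_L2 by (rule L2_meas)
  have s_m[measurable]: "s \<in> borel_measurable M" using s_L2 by (rule L2_meas)
  obtain Cs where Cs: "AE x in M. \<bar>s x\<bar> \<le> Cs" using wLinf unfolding Linfty_def s_def by blast
  define K where "K = Bu + \<bar>Cs\<bar> + 1"
  define B where "B = 2 * Bu"
  have K0: "K > 0" unfolding K_def using Bu0 by simp
  have ud_ab: "AE x in M. ua x \<le> ud x \<and> ud x \<le> ub x" by (rule Uad_ab[OF ud_sol(1)])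
  have bang: "AE x in M. (p x > 0 \<longrightarrow> ud x = ub x) \<and> (p x < 0 \<longrightarrow> ud x = ua x)"
  proof -
    define h where "h = (\<lambda>x. if p x > 0 then ub x - ud x else if p x < 0 then ua x - ud x else 0)"
    have h_m[measurable]: "h \<in> borel_measurable M" unfolding h_def by measurable
    have h_bd: "AE x in M. \<bar>h x\<bar> \<le> 2 * Bu"
      using Uad_bd[OF ud_sol(1)] Ca Cb' by eventually_elim (auto simp: h_def Bu_def)
    have h_L2: "h \<in> L2 M" by (rule L2_bdd[OF fm h_m h_bd])
    have hp: "AE x in M. 0 \<le> h x * p x"
      using ud_ab by eventually_elim (auto simp: h_def mult_nonpos_nonpos)
    have "0 \<le> inner (S ud - z) (S h)"
    proof (rule small_lin)
      fix t :: real assume t: "0 < t" "t \<le> 1"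
      define v where "v = (\<lambda>x. ud x + t * h x)"
      have vL2: "v \<in> L2 M" unfolding v_def by (rule L2_add[OF ud_L2 L2_scale[OF h_L2]])
      have "AE x in M. ua x \<le> v x \<and> v x \<le> ub x"
        using ud_ab
      proof eventually_elim
        case (elim x)
        show ?case
        proof (cases "p x > 0")
          case True
          have "t * (ub x - ud x) \<le> 1 * (ub x - ud x)" using elim t by (intro mult_right_mono) auto
          moreover have "0 \<le> t * (ub x - ud x)" using elim t by simp
          ultimately show ?thesis using True elim unfolding v_def h_def by auto
        next
          case False
          show ?thesis
          proof (cases "p x < 0")
            case True
            have "t * (ud x - ua x) \<le> 1 * (ud x - ua x)" using elim t by (intro mult_right_mono) auto
            moreover have "0 \<le> t * (ud x - ua x)" using elim t by simp
            ultimately show ?thesis using True False elim unfolding v_def h_def by (auto simp: algebra_simps)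
          next
            case False
            then show ?thesis using \<open>\<not> p x > 0\<close> elim unfolding v_def h_def by auto
          qed
        qed
      qed
      then have "v \<in> Uad M ua ub" by (rule Uad_I[OF vL2])
      then have "norm (S ud - z) \<le> norm (S v - z)" using ud_sol(2) by blast
      moreover have "S v = S ud + t *\<^sub>R S h"
        unfolding v_def using Sadd[OF ud_L2 L2_scale[OF h_L2]] Sscale[OF h_L2] by simp
      ultimately have "norm (S ud - z) \<le> norm ((S ud - z) + t *\<^sub>R S h)"
        by (simp add: algebra_simps)
      then have "(norm (S ud - z))\<^sup>2 \<le> (norm ((S ud - z) + t *\<^sub>R S h))\<^sup>2"
        by (simp add: power_mono)
      also have "\<dots> = (norm (S ud - z))\<^sup>2 + 2 * t * inner (S ud - z) (S h) + t\<^sup>2 * (norm (S h))\<^sup>2"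
        by (rule norm_add_scale_sq)
      finally have "0 \<le> t * (2 * inner (S ud - z) (S h) + t * (norm (S h))\<^sup>2)"
        by (simp add: power2_eq_square algebra_simps)
      then show "0 \<le> 2 * inner (S ud - z) (S h) + t * (norm (S h))\<^sup>2"
        using t by (simp add: zero_le_mult_iff)
    qed
    moreover have "inner (S ud - z) (S h) = - integral\<^sup>L M (\<lambda>x. h x * p x)"
    proof -
      have "inner (S ud - z) (S h) = - inner (S h) (z - S ud)"
        by (simp add: inner_commute inner_diff_right)
      also have "\<dots> = - integral\<^sup>L M (\<lambda>x. h x * p x)" using adj[OF h_L2] unfolding p_def by simp
      finally show ?thesis .
    qed
    ultimately have "integral\<^sup>L M (\<lambda>x. h x * p x) \<le> 0" by simp
    moreover have "integral\<^sup>L M (\<lambda>x. h x * p x) \<ge> 0" using hp by (rule integral_nonneg_AE)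
    ultimately have "integral\<^sup>L M (\<lambda>x. h x * p x) = 0" by simp
    then have "AE x in M. h x * p x = 0"
      using integral_nonneg_eq_0_iff_AE[OF L2_mult_int[OF h_L2 p_L2] hp] by simp
    then show ?thesis
      by eventually_elim (auto simp: h_def split: if_splits)
  qed
  have lamS: "lam m = (\<lambda>x. \<Sum>i=1..m. (1 / \<alpha> i) * Sstar (z - S (u i)) x)" for m
  proof (cases "m = 0")
    case True then show ?thesis using init(2) by simp
  next
    case False then show ?thesis using step by simp
  qed
  have lam_L2: "lam m \<in> L2 M" for m
    unfolding lamS by (rule L2_sum) (rule L2_scale[OF SsL2])
  have lam_m[measurable]: "lam m \<in> borel_measurable M" for m using lam_L2 by (rule L2_meas)
  have u_U: "u k \<in> Uad M ua ub" if "k \<ge> 1" for k using step that by blast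
  have u_L2: "u k \<in> L2 M" if "k \<ge> 1" for k using Uad_L2[OF u_U[OF that]] .
  define v where "v k = projUad ua ub (lam k)" for k
  have v_m[measurable]: "v k \<in> borel_measurable M" for k unfolding v_def projUad_def by measurable
  have v_ab: "AE x in M. ua x \<le> v k x \<and> v k x \<le> ub x" for k
    using uab(3) by eventually_elim (auto simp: v_def projUad_def)
  have v_bd: "AE x in M. \<bar>v k x\<bar> \<le> Bu" for k
    using v_ab[of k] Ca Cb' by eventually_elim (auto simp: Bu_def)
  have v_L2: "v k \<in> L2 M" for k by (rule L2_bdd[OF fm v_m v_bd])
  define \<delta> where "\<delta> k = L2norm M (\<lambda>x. u k x - v k x)" for k
  have \<delta>0: "\<delta> k \<ge> 0" for k unfolding \<delta>_def by (rule L2norm_nonneg)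
  have bres: "(1 + 1 / \<alpha> k) * \<delta> k \<le> \<epsilon> k" if k1: "k \<ge> 1" for k
  proof -
    obtain m where m: "k = Suc m" using k1 by (cases k) auto
    have "(\<lambda>y. (1 / \<alpha> k) * Sstar (z - S (u k)) y + lam (k - 1) y) = lam k"
      unfolding m lamS by (auto simp: algebra_simps)
    then have "Bres M ua ub S Sstar z (\<alpha> k) (lam (k - 1)) (u k) = (1 + 1 / \<alpha> k) * \<delta> k"
      unfolding Bres_def \<delta>_def v_def by simp
    then show ?thesis using step k1 by auto
  qed
  obtain Am0 where Am0: "\<And>j. \<bar>\<alpha> j\<bar> \<le> Am0" using alpha_bdd unfolding bounded_real by blast
  define Am where "Am = Am0 + 1"
  have Am: "\<alpha> j \<le> Am" for j using Am0[of j] unfolding Am_def by simp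
  have Am_pos: "Am > 0" using Am0[of 0] alpha_pos unfolding Am_def by (smt (verit))
  have inv_al: "1 / \<alpha> j \<ge> 1 / Am" for j
    using alpha_pos Am by (simp add: frac_le)
  have \<gamma>Suc: "\<gamma> (Suc m) = \<gamma> m + 1 / \<alpha> (Suc m)" for m unfolding \<gamma>_def by simp
  have \<gamma>0: "\<gamma> 0 = 0" unfolding \<gamma>_def by simp
  have \<gamma>_ge: "\<gamma> m \<ge> real m / Am" for m
  proof (induction m)
    case 0 then show ?case using \<gamma>0 by simp
  next
    case (Suc m)
    have "real (Suc m) / Am = real m / Am + 1 / Am" by (simp add: add_divide_distrib)
    then show ?case using Suc inv_al[of "Suc m"] \<gamma>Suc[of m] by linarith
  qed
  have \<gamma>_nn: "\<gamma> m \<ge> 0" for m using \<gamma>_ge[of m] Am_pos by (smt (verit) divide_nonneg_pos of_nat_0_le_iff)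
  have \<gamma>_pos: "\<gamma> m > 0" if "m \<ge> 1" for m
  proof -
    have "real m / Am > 0" using that Am_pos by simp
    then show ?thesis using \<gamma>_ge[of m] by linarith
  qed
  have I_M: "I \<in> sets M"
    unfolding M_def using I \<Omega>(2) by (subst sets_restrict_space_iff) auto
  have KI: "integral\<^sup>L M (\<lambda>x. (v k x - ud x) * (lam k x - (s x + \<gamma> k * p x)))
      \<ge> (L2norm M (\<lambda>x. v k x - ud x))\<^sup>2 - K * B * (c * (K / \<gamma> k) powr \<kappa>)" if k1: "k \<ge> 1" for k
  proof -
    define g where "g = \<gamma> k"
    have g0: "g > 0" unfolding g_def using \<gamma>_pos[OF k1] .
    define E where "E = {x\<in>\<Omega> - I. 0 < \<bar>p x\<bar> \<and> \<bar>p x\<bar> < K / g}"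
    have E_eq: "E = (space M - I) \<inter> {x\<in>space M. 0 < \<bar>p x\<bar> \<and> \<bar>p x\<bar> < K / g}"
      unfolding E_def spM by auto
    have E_M: "E \<in> sets M" unfolding E_eq using I_M by measurable
    have EO: "E \<subseteq> \<Omega>" unfolding E_def by auto
    have mE: "measure M E = measure lebesgue E"
      unfolding M_def by (rule measure_restrict_space) (use \<Omega>(2) EO in auto)
    have mE2: "measure lebesgue E \<le> c * (K / g) powr \<kappa>"
    proof -
      have "emeasure lebesgue E \<le> ennreal (c * (K / g) powr \<kappa>)"
        unfolding E_def p_def using meas[of "K / g"] K0 g0 by simp
      moreover have "0 \<le> c * (K / g) powr \<kappa>" using c by simp
      ultimately show ?thesis unfolding measure_def by (rule enn2real_leI[rotated])
    qed
    have KB0: "K * B \<ge> 0" using K0 Bu0 unfolding B_def by simp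
    have pt: "AE x in M. (v k x - ud x) * (lam k x - (s x + g * p x))
               \<ge> (v k x - ud x)\<^sup>2 - K * B * indicator E x"
      using uab(3) ud_ab bang Cs Iud Uad_bd[OF ud_sol(1)] v_bd[of k] AE_space
    proof eventually_elim
      case (elim x)
      have xO: "x \<in> \<Omega>" using elim spM by simp
      have Ks: "\<bar>ud x - s x\<bar> \<le> K" using elim unfolding K_def by linarith
      have Bd: "\<bar>max (ua x) (min (ub x) (lam k x)) - ud x\<bar> \<le> B"
        using elim unfolding B_def v_def projUad_def by linarith
      have inI: "ud x = max (ua x) (min (ub x) (s x))" if "x \<in> I"
        using elim that unfolding projUad_def s_def by simp
      have nI: "p x \<noteq> 0" if "x \<notin> I" using I0 that xO unfolding p_def by blast
      have "(lam k x - (s x + g * p x)) * (max (ua x) (min (ub x) (lam k x)) - ud x)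
           \<ge> (max (ua x) (min (ub x) (lam k x)) - ud x)\<^sup>2
             - (if \<not> (x \<in> I) \<and> 0 < \<bar>p x\<bar> \<and> \<bar>p x\<bar> < K/g then K*B else 0)"
        by (rule key_pt) (use elim g0 K0 Ks Bd inI nI in auto)
      moreover have "(if \<not> (x \<in> I) \<and> 0 < \<bar>p x\<bar> \<and> \<bar>p x\<bar> < K/g then K*B else 0) = K * B * indicator E x"
        using xO unfolding E_def by (auto simp: indicator_def)
      ultimately show ?case unfolding v_def projUad_def by (simp add: mult.commute)
    qed
    have int1: "integrable M (\<lambda>x. (v k x - ud x) * (lam k x - (s x + g * p x)))"
      by (intro L2_mult_int L2_diff L2_add L2_scale v_L2 ud_L2 lam_L2 s_L2 p_L2)
    have int2: "integrable M (\<lambda>x. (v k x - ud x)\<^sup>2)"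
      using L2_diff[OF v_L2 ud_L2] by (simp add: L2_def)
    have int3: "integrable M (indicator E :: _ \<Rightarrow> real)"
      by (rule finite_measure.integrable_const_bound[OF fm, where B=1]) (use E_M in auto)
    have "integral\<^sup>L M (\<lambda>x. (v k x - ud x)\<^sup>2 - K * B * indicator E x)
          \<le> integral\<^sup>L M (\<lambda>x. (v k x - ud x) * (lam k x - (s x + g * p x)))"
      by (rule integral_mono_AE[OF _ int1 pt]) (use int2 int3 in auto)
    moreover have "integral\<^sup>L M (\<lambda>x. (v k x - ud x)\<^sup>2 - K * B * indicator E x)
        = (L2norm M (\<lambda>x. v k x - ud x))\<^sup>2 - K * B * measure M E"
      using int2 int3 E_M by (simp add: L2norm_sq Int_absorb1 sets.sets_into_space)
    moreover have "K * B * measure M E \<le> K * B * (c * (K / g) powr \<kappa>)"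
      using mE mE2 KB0 by (simp add: mult_left_mono)
    ultimately show ?thesis unfolding g_def by linarith
  qed
  define e where "e m = (\<Sum>i=1..m. (1 / \<alpha> i) *\<^sub>R (z - S (u i))) - w - \<gamma> m *\<^sub>R (z - S ud)" for m
  have int_id: "integral\<^sup>L M (\<lambda>x. f x * (lam k x - (s x + \<gamma> k * p x))) = inner (S f) (e k)"
    if f: "f \<in> L2 M" and k1: "k \<ge> 1" for f k
  proof -
    have i1: "integrable M (\<lambda>x. f x * Sstar y x)" for y by (rule L2_mult_int[OF f SsL2])
    have "(\<lambda>x. f x * (lam k x - (s x + \<gamma> k * p x)))
        = (\<lambda>x. (\<Sum>i=1..k. (1 / \<alpha> i) * (f x * Sstar (z - S (u i)) x)) - f x * s x - \<gamma> k * (f x * p x))"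
      unfolding lamS by (auto simp: algebra_simps sum_distrib_left)
    then have "integral\<^sup>L M (\<lambda>x. f x * (lam k x - (s x + \<gamma> k * p x)))
        = (\<Sum>i=1..k. (1 / \<alpha> i) * integral\<^sup>L M (\<lambda>x. f x * Sstar (z - S (u i)) x))
          - integral\<^sup>L M (\<lambda>x. f x * s x) - \<gamma> k * integral\<^sup>L M (\<lambda>x. f x * p x)"
      using i1 unfolding s_def p_def
      by (simp add: integral_sum integrable_sum integral_diff)
    also have "\<dots> = (\<Sum>i=1..k. (1 / \<alpha> i) * inner (S f) (z - S (u i)))
          - inner (S f) w - \<gamma> k * inner (S f) (z - S ud)"
      using adj[OF f] unfolding s_def p_def by simp
    also have "\<dots> = inner (S f) (e k)"
      unfolding e_def by (simp add: inner_diff_right inner_sum_right)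
    finally show ?thesis .
  qed
  have eSuc: "e (Suc m) = e m + (1 / \<alpha> (Suc m)) *\<^sub>R (S ud - S (u (Suc m)))" for m
    unfolding e_def \<gamma>Suc by (simp add: algebra_simps scaleR_diff_right)
  have e0: "e 0 = - w" unfolding e_def \<gamma>0 by simp
  define D where "D = sqrt ((2 * Bu)\<^sup>2 * measure M (space M))"
  have uD: "L2norm M (\<lambda>x. u k x - ud x) \<le> D" if k1: "k \<ge> 1" for k
    unfolding D_def
  proof (rule L2norm_bdd[OF fm])
    show "(\<lambda>x. u k x - ud x) \<in> borel_measurable M" using L2_diff[OF u_L2[OF k1] ud_L2] by (rule L2_meas)
    show "AE x in M. \<bar>u k x - ud x\<bar> \<le> 2 * Bu"
      using Uad_bd[OF u_U[OF k1]] Uad_bd[OF ud_sol(1)] by eventually_elim linarith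
  qed
  have SuD: "norm (S (u k) - S ud) \<le> C * D" if k1: "k \<ge> 1" for k
  proof -
    have "norm (S (u k) - S ud) = norm (S (\<lambda>x. u k x - ud x))" using Sdiff[OF u_L2[OF k1] ud_L2] by simp
    also have "\<dots> \<le> C * L2norm M (\<lambda>x. u k x - ud x)" by (rule Cb[OF L2_diff[OF u_L2[OF k1] ud_L2]])
    also have "\<dots> \<le> C * D" using uD[OF k1] C0 by (simp add: mult_left_mono)
    finally show ?thesis .
  qed
  have e_bd: "norm (e m) \<le> norm w + C * D * \<gamma> m" for m
  proof (induction m)
    case 0 then show ?case using e0 \<gamma>0 by simp
  next
    case (Suc m)
    have "norm (e (Suc m)) \<le> norm (e m) + norm ((1 / \<alpha> (Suc m)) *\<^sub>R (S ud - S (u (Suc m))))"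
      unfolding eSuc by (rule norm_triangle_ineq)
    also have "norm ((1 / \<alpha> (Suc m)) *\<^sub>R (S ud - S (u (Suc m)))) = (1 / \<alpha> (Suc m)) * norm (S (u (Suc m)) - S ud)"
      using alpha_pos[rule_format, of "Suc m"] by (simp add: norm_minus_commute)
    also have "\<dots> \<le> (1 / \<alpha> (Suc m)) * (C * D)"
      using SuD[of "Suc m"] alpha_pos[rule_format, of "Suc m"] by (simp add: divide_right_mono)
    finally show ?case using Suc \<gamma>Suc[of m] by (simp add: algebra_simps)
  qed
  have stepI: "(norm (e (Suc m)))\<^sup>2 \<le> (norm (e m))\<^sup>2 - 2 * (1 / \<alpha> (Suc m)) *
      ((L2norm M (\<lambda>x. v (Suc m) x - ud x))\<^sup>2 - K * B * (c * (K / \<gamma> (Suc m)) powr \<kappa>)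
        - norm (e (Suc m)) * (C * \<delta> (Suc m)))" for m
  proof -
    define k where "k = Suc m"
    have k1: "k \<ge> 1" unfolding k_def by simp
    define a where "a = 1 / \<alpha> k"
    have a0: "a > 0" unfolding a_def using alpha_pos by simp
    define \<Delta> where "\<Delta> = S (u k) - S ud"
    have em: "e m = e k + a *\<^sub>R \<Delta>" unfolding k_def a_def \<Delta>_def eSuc by (simp add: algebra_simps)
    have "(norm (e m))\<^sup>2 = (norm (e k))\<^sup>2 + 2 * a * inner (e k) \<Delta> + a\<^sup>2 * (norm \<Delta>)\<^sup>2"
      unfolding em by (rule norm_add_scale_sq)
    then have n1: "(norm (e m))\<^sup>2 \<ge> (norm (e k))\<^sup>2 + 2 * a * inner (e k) \<Delta>" by simp
    have vd_L2: "(\<lambda>x. v k x - ud x) \<in> L2 M" by (rule L2_diff[OF v_L2 ud_L2])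
    have uv_L2: "(\<lambda>x. u k x - v k x) \<in> L2 M" by (rule L2_diff[OF u_L2[OF k1] v_L2])
    have split: "inner (e k) \<Delta> = inner (S (\<lambda>x. v k x - ud x)) (e k) + inner (e k) (S (\<lambda>x. u k x - v k x))"
      unfolding \<Delta>_def Sdiff[OF v_L2 ud_L2] Sdiff[OF u_L2[OF k1] v_L2]
      by (simp add: inner_diff_right inner_diff_left inner_commute)
    have t1: "inner (S (\<lambda>x. v k x - ud x)) (e k) \<ge> (L2norm M (\<lambda>x. v k x - ud x))\<^sup>2 - K * B * (c * (K / \<gamma> k) powr \<kappa>)"
      using int_id[OF vd_L2 k1] KI[OF k1] by simp
    have "\<bar>inner (e k) (S (\<lambda>x. u k x - v k x))\<bar> \<le> norm (e k) * norm (S (\<lambda>x. u k x - v k x))"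
      by (rule Cauchy_Schwarz_ineq2)
    also have "\<dots> \<le> norm (e k) * (C * \<delta> k)"
      unfolding \<delta>_def by (rule mult_left_mono[OF Cb[OF uv_L2] norm_ge_zero])
    finally have t2: "inner (e k) (S (\<lambda>x. u k x - v k x)) \<ge> - (norm (e k) * (C * \<delta> k))" by linarith
    have "inner (e k) \<Delta> \<ge> (L2norm M (\<lambda>x. v k x - ud x))\<^sup>2 - K * B * (c * (K / \<gamma> k) powr \<kappa>) - norm (e k) * (C * \<delta> k)"
      using split t1 t2 by linarith
    then have "2 * a * inner (e k) \<Delta> \<ge> 2 * a * ((L2norm M (\<lambda>x. v k x - ud x))\<^sup>2 - K * B * (c * (K / \<gamma> k) powr \<kappa>) - norm (e k) * (C * \<delta> k))"
      using a0 by (simp add: mult_left_mono)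
    then show ?thesis using n1 unfolding k_def a_def by linarith
  qed
  have eps0: "\<epsilon> \<longlonglongrightarrow> 0"
  proof (rule Lim_null_comparison)
    show "\<forall>\<^sub>F n in sequentially. norm (\<epsilon> n) \<le> Am * (\<gamma> (n - 1) * \<epsilon> n)"
      unfolding eventually_sequentially
    proof (intro exI allI impI)
      fix n :: nat assume n: "n \<ge> 2"
      have "\<gamma> (n - 1) \<ge> real (n - 1) / Am" by (rule \<gamma>_ge)
      moreover have "real (n - 1) \<ge> 1" using n by simp
      ultimately have "\<gamma> (n - 1) \<ge> 1 / Am" using Am_pos by (smt (verit) divide_right_mono)
      then have "Am * \<gamma> (n - 1) \<ge> 1" using Am_pos by (simp add: field_simps)
      then have "1 * \<epsilon> n \<le> (Am * \<gamma> (n - 1)) * \<epsilon> n" using eps_pos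
        by (intro mult_right_mono) (auto simp: less_imp_le)
      then have "\<epsilon> n \<le> Am * (\<gamma> (n - 1) * \<epsilon> n)" by (simp only: mult.assoc mult_1)
      moreover have "norm (\<epsilon> n) = \<epsilon> n" using eps_pos by (simp add: less_imp_le)
      ultimately show "norm (\<epsilon> n) \<le> Am * (\<gamma> (n - 1) * \<epsilon> n)" by simp
    qed
    show "(\<lambda>n. Am * (\<gamma> (n - 1) * \<epsilon> n)) \<longlonglongrightarrow> 0"
      by (rule tendsto_mult_right_zero[OF eps_lim])
  qed
  have invg: "(\<lambda>k. K / \<gamma> k) \<longlonglongrightarrow> 0"
  proof (rule Lim_null_comparison)
    show "\<forall>\<^sub>F k in sequentially. norm (K / \<gamma> k) \<le> K * Am * inverse (real k)"
      unfolding eventually_sequentially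
    proof (intro exI allI impI)
      fix k :: nat assume k: "k \<ge> 1"
      have g: "\<gamma> k > 0" using \<gamma>_pos[OF k] .
      have "K / \<gamma> k \<le> K / (real k / Am)"
        using K0 g \<gamma>_ge[of k] k Am_pos by (intro divide_left_mono) auto
      then show "norm (K / \<gamma> k) \<le> K * Am * inverse (real k)"
        using K0 g by (simp add: field_simps)
    qed
    show "(\<lambda>k. K * Am * inverse (real k)) \<longlonglongrightarrow> 0"
      by (rule tendsto_mult_right_zero[OF lim_inverse_n])
  qed
  have powr0: "(\<lambda>k. (K / \<gamma> k) powr \<kappa>) \<longlonglongrightarrow> 0"
    by (rule tendsto_zero_powrI[OF invg tendsto_const _ \<kappa>]) (use K0 \<gamma>_nn in simp)
  define errb where "errb k = \<epsilon> k * \<epsilon> k + K * B * (c * (K / \<gamma> k) powr \<kappa>) + C * norm w * \<epsilon> k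
      + C * (C * D) * (\<gamma> (k - 1) * \<epsilon> k + \<epsilon> k)" for k
  have errb0: "errb \<longlonglongrightarrow> 0"
    unfolding errb_def
    by (intro tendsto_add_zero tendsto_mult_zero eps0 tendsto_mult_right_zero powr0 eps_lim)
  have small: "\<exists>i\<ge>1. L2norm M (\<lambda>x. u i x - ud x) < \<rho>" if \<rho>: "\<rho> > 0" for \<rho>
  proof (rule ccontr)
    assume "\<not> ?thesis"
    then have H: "\<rho> \<le> L2norm M (\<lambda>x. u i x - ud x)" if "i \<ge> 1" for i using that by force
    have "\<rho>\<^sup>2 / 4 > 0" using \<rho> by simp
    then obtain N where N: "\<And>k. k \<ge> N \<Longrightarrow> errb k < \<rho>\<^sup>2 / 4"
      using order_tendstoD(2)[OF errb0] unfolding eventually_sequentially by blast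
    have dec: "(norm (e (Suc m)))\<^sup>2 \<le> (norm (e m))\<^sup>2 - \<rho>\<^sup>2 / (2 * Am)" if mN: "m \<ge> N" for m
    proof -
      define k where "k = Suc m"
      have k1: "k \<ge> 1" unfolding k_def by simp
      have al: "\<alpha> k > 0" using alpha_pos by simp
      have ia: "1 / \<alpha> k > 0" using al by simp
      have b1: "(1 + 1 / \<alpha> k) * \<delta> k \<le> \<epsilon> k" by (rule bres[OF k1])
      have b2: "(1 + 1 / \<alpha> k) * \<delta> k = \<delta> k + (1 / \<alpha> k) * \<delta> k" by (simp add: distrib_right)
      have b3: "(1 / \<alpha> k) * \<delta> k \<ge> 0" using ia \<delta>0[of k] by simp
      have b4: "\<delta> k / \<alpha> k = (1 / \<alpha> k) * \<delta> k" by simp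
      have dle: "\<delta> k \<le> \<epsilon> k" using b1 b2 b3 by linarith
      have dle2: "\<delta> k / \<alpha> k \<le> \<epsilon> k" using b1 b2 b4 \<delta>0[of k] by linarith
      have dsq: "(\<delta> k)\<^sup>2 \<le> \<epsilon> k * \<epsilon> k" using mult_mono[OF dle dle less_imp_le[OF eps_pos[rule_format, of k]] \<delta>0[of k]]
        by (simp add: power2_eq_square)
      have ud_L2': "(\<lambda>x. u k x - ud x) \<in> L2 M" by (rule L2_diff[OF u_L2[OF k1] ud_L2])
      have vd_L2: "(\<lambda>x. v k x - ud x) \<in> L2 M" by (rule L2_diff[OF v_L2 ud_L2])
      have uv_L2: "(\<lambda>x. u k x - v k x) \<in> L2 M" by (rule L2_diff[OF u_L2[OF k1] v_L2])
      have "\<rho>\<^sup>2 \<le> (L2norm M (\<lambda>x. u k x - ud x))\<^sup>2"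
        by (rule power_mono[OF H[OF k1]]) (use \<rho> in simp)
      also have "\<dots> = integral\<^sup>L M (\<lambda>x. (u k x - ud x)\<^sup>2)" by (rule L2norm_sq)
      also have "\<dots> \<le> integral\<^sup>L M (\<lambda>x. 2 * (v k x - ud x)\<^sup>2 + 2 * (u k x - v k x)\<^sup>2)"
      proof (rule integral_mono)
        show "integrable M (\<lambda>x. (u k x - ud x)\<^sup>2)" using ud_L2' by (simp add: L2_def)
        show "integrable M (\<lambda>x. 2 * (v k x - ud x)\<^sup>2 + 2 * (u k x - v k x)\<^sup>2)"
          using vd_L2 uv_L2 by (simp add: L2_def)
        fix x
        have "0 \<le> (u k x + ud x - 2 * v k x)\<^sup>2" by simp
        then show "(u k x - ud x)\<^sup>2 \<le> 2 * (v k x - ud x)\<^sup>2 + 2 * (u k x - v k x)\<^sup>2"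
          by (simp add: power2_eq_square algebra_simps)
      qed
      also have "\<dots> = 2 * integral\<^sup>L M (\<lambda>x. (v k x - ud x)\<^sup>2) + 2 * integral\<^sup>L M (\<lambda>x. (u k x - v k x)\<^sup>2)"
        using vd_L2 uv_L2 unfolding L2_def by simp
      also have "\<dots> = 2 * (L2norm M (\<lambda>x. v k x - ud x))\<^sup>2 + 2 * (\<delta> k)\<^sup>2"
        unfolding \<delta>_def L2norm_sq ..
      finally have r1: "\<rho>\<^sup>2 \<le> 2 * (L2norm M (\<lambda>x. v k x - ud x))\<^sup>2 + 2 * (\<delta> k)\<^sup>2" .
      have gd: "\<gamma> k * \<delta> k = \<gamma> m * \<delta> k + \<delta> k / \<alpha> k"
        unfolding k_def \<gamma>Suc by (simp add: distrib_right)
      have "norm (e k) * (C * \<delta> k) \<le> (norm w + C * D * \<gamma> k) * (C * \<delta> k)"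
        using e_bd[of k] C0 \<delta>0[of k] by (simp add: mult_right_mono)
      also have "\<dots> = C * norm w * \<delta> k + C * (C * D) * (\<gamma> k * \<delta> k)"
        by (simp only: distrib_right distrib_left mult.assoc mult.left_commute)
      also have "\<dots> = C * norm w * \<delta> k + C * (C * D) * (\<gamma> m * \<delta> k + \<delta> k / \<alpha> k)"
        by (simp only: gd)
      also have "\<dots> \<le> C * norm w * \<epsilon> k + C * (C * D) * (\<gamma> (k - 1) * \<epsilon> k + \<epsilon> k)"
      proof -
        have D0: "D \<ge> 0" unfolding D_def by simp
        have "\<gamma> m * \<delta> k \<le> \<gamma> m * \<epsilon> k" using dle \<gamma>_nn[of m] by (simp add: mult_left_mono)
        then have "\<gamma> m * \<delta> k + \<delta> k / \<alpha> k \<le> \<gamma> (k - 1) * \<epsilon> k + \<epsilon> k" using dle2 unfolding k_def by simp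
        then have "C * (C * D) * (\<gamma> m * \<delta> k + \<delta> k / \<alpha> k) \<le> C * (C * D) * (\<gamma> (k - 1) * \<epsilon> k + \<epsilon> k)"
          using C0 D0 by (simp add: mult_left_mono)
        moreover have "C * norm w * \<delta> k \<le> C * norm w * \<epsilon> k" using dle C0 by (simp add: mult_left_mono)
        ultimately show ?thesis by linarith
      qed
      finally have r2: "norm (e k) * (C * \<delta> k) \<le> C * norm w * \<epsilon> k + C * (C * D) * (\<gamma> (k - 1) * \<epsilon> k + \<epsilon> k)" .
      have eN: "errb k < \<rho>\<^sup>2 / 4" using N mN unfolding k_def by simp
      define X where "X = (L2norm M (\<lambda>x. v k x - ud x))\<^sup>2 - K * B * (c * (K / \<gamma> k) powr \<kappa>) - norm (e k) * (C * \<delta> k)"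
      have X: "X \<ge> \<rho>\<^sup>2 / 4" using r1 r2 eN dsq unfolding X_def errb_def by linarith
      have "2 * (1 / \<alpha> k) * (\<rho>\<^sup>2 / 4) \<le> 2 * (1 / \<alpha> k) * X"
        by (rule mult_left_mono[OF X]) (use ia in simp)
      moreover have "\<rho>\<^sup>2 / (2 * Am) \<le> 2 * (1 / \<alpha> k) * (\<rho>\<^sup>2 / 4)"
      proof -
        have "\<rho>\<^sup>2 / (2 * Am) = (1 / Am) * (\<rho>\<^sup>2 / 2)" by simp
        also have "\<dots> \<le> (1 / \<alpha> k) * (\<rho>\<^sup>2 / 2)" by (rule mult_right_mono[OF inv_al[of k]]) simp
        finally show ?thesis by simp
      qed
      moreover have "(norm (e k))\<^sup>2 \<le> (norm (e m))\<^sup>2 - 2 * (1 / \<alpha> k) * X"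
        using stepI[of m] unfolding X_def k_def .
      ultimately show ?thesis unfolding k_def by linarith
    qed
    have iter: "(norm (e (N + j)))\<^sup>2 \<le> (norm (e N))\<^sup>2 - real j * (\<rho>\<^sup>2 / (2 * Am))" for j
    proof (induction j)
      case 0 then show ?case by simp
    next
      case (Suc j)
      have "(norm (e (Suc (N + j))))\<^sup>2 \<le> (norm (e (N + j)))\<^sup>2 - \<rho>\<^sup>2 / (2 * Am)" by (rule dec) simp
      moreover have "real (Suc j) * (\<rho>\<^sup>2 / (2 * Am)) = real j * (\<rho>\<^sup>2 / (2 * Am)) + \<rho>\<^sup>2 / (2 * Am)"
        using of_nat_Suc[of j] by (metis add.commute distrib_right mult_1)
      ultimately show ?case using Suc by simp
    qed
    have q0: "\<rho>\<^sup>2 / (2 * Am) > 0" using \<rho> Am_pos by simp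
    define q where "q = \<rho>\<^sup>2 / (2 * Am)"
    have q0': "q > 0" unfolding q_def by (rule q0)
    obtain j :: nat where j: "real j > (norm (e N))\<^sup>2 / q" using reals_Archimedean2 by blast
    then have "real j * q > (norm (e N))\<^sup>2" using q0' by (simp add: pos_divide_less_eq)
    then have "real j * (\<rho>\<^sup>2 / (2 * Am)) > (norm (e N))\<^sup>2" unfolding q_def .
    then have "(norm (e (N + j)))\<^sup>2 < 0" using iter[of j] by linarith
    then show False by simp
  qed
  show ?thesis
  proof (rule LIMSEQ_I)
    fix r :: real assume r: "r > 0"
    obtain i where i: "i \<ge> 1" "L2norm M (\<lambda>x. u i x - ud x) < r" using small[OF r] by blast
    show "\<exists>no. \<forall>n\<ge>no. norm (Min ((\<lambda>i. L2norm M (\<lambda>x. u i x - ud x)) ` {1..n}) - 0) < r"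
    proof (intro exI allI impI)
      fix n assume n: "n \<ge> i"
      have fin: "finite ((\<lambda>i. L2norm M (\<lambda>x. u i x - ud x)) ` {1..n})" by simp
      have ne: "(\<lambda>i. L2norm M (\<lambda>x. u i x - ud x)) ` {1..n} \<noteq> {}" using n i by auto
      have "Min ((\<lambda>i. L2norm M (\<lambda>x. u i x - ud x)) ` {1..n}) \<le> L2norm M (\<lambda>x. u i x - ud x)"
        by (rule Min_le[OF fin]) (use n i in auto)
      moreover have "Min ((\<lambda>i. L2norm M (\<lambda>x. u i x - ud x)) ` {1..n}) \<ge> 0"
        using Min_in[OF fin ne] L2norm_nonneg by auto
      ultimately show "norm (Min ((\<lambda>i. L2norm M (\<lambda>x. u i x - ud x)) ` {1..n}) - 0) < r"
        using i by simp
    qed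
  qed
qed

end
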